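(* Let $K$ be a quadratic number field with ring of integers $\mathcal{O}_K$. There exists $X\in\mathcal{O}_K$ such that every element of $\mathcal{O}_K$ can be written uniquely as a finite sum $\sum_j\alpha_jX^j$ with $\alpha_j\in\{0,1\}$ (i.e. $X$ is an $\mathbb{S}$-generator of $\mathcal{O}_K$) if and only if $K$ is one of the following, and in each case the indicated element is such a generator: $\mathbb{Q}(\sqrt{-1})$ with $X=-1+\sqrt{-1}$ of $\mathcal{O}_K=\mathbb{Z}[\sqrt{-1}]$; $\mathbb{Q}(\sqrt{-2})$ with $X=\sqrt{-2}$ of $\mathcal{O}_K=\mathbb{Z}[\sqrt{-2}]$; $\mathbb{Q}(\sqrt{-7})$ with $X=\frac12(1+\sqrt{-7})$.
   Context: An $\mathbb{S}$-generator (i.e. $\mathbb{S}[\mu_{1,+}]$-generator, $\mu_1=\{1\}$) of a ring $A$ is an element $X\in A$ such that every element of $A$ is uniquely a finite sum of distinct powers $X^j$, $j\ge0$ (coefficients in $\{0,1\}$). *)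

theory Defs
  imports Complex_Main "HOL-Computational_Algebra.Polynomial" "HOL-Computational_Algebra.Squarefree"
begin

text \<open>The quadratic number field Q(sqrt d), d a squarefree integer different from 0 and 1,
  realised as a subfield of the complex numbers (for d < 0, csqrt d = i * sqrt |d|).
  Every quadratic number field is isomorphic to exactly one such field.\<close>
definition quad_field :: "int \<Rightarrow> complex set" where
  "quad_field d = {of_rat a + of_rat b * csqrt (of_int d) | a b. True}"

definition ring_of_integers :: "complex set \<Rightarrow> complex set" where
  "ring_of_integers K = {x \<in> K. algebraic_int x}"

definition S_generator :: "complex set \<Rightarrow> complex \<Rightarrow> bool" where
  "S_generator A X \<longleftrightarrow> X \<in> A \<and>
     (\<forall>y\<in>A. \<exists>!J::nat set. finite J \<and> y = (\<Sum>j\<in>J. X ^ j))"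

end

theory Submission
  imports Defs
begin


lemma map_poly_of_rat_mult:
  "map_poly (of_rat :: rat \<Rightarrow> 'a::field_char_0) (p * q) = map_poly of_rat p * map_poly of_rat q"
  by (intro poly_eqI) (simp add: coeff_map_poly coeff_mult of_rat_sum of_rat_mult)

lemma map_poly_of_rat_add:
  "map_poly (of_rat :: rat \<Rightarrow> 'a::field_char_0) (p + q) = map_poly of_rat p + map_poly of_rat q"
  by (intro poly_eqI) (simp add: coeff_map_poly of_rat_add)

lemma map_poly_of_int_mult:
  "map_poly (of_int :: int \<Rightarrow> 'a::comm_ring_1) (p * q) = map_poly of_int p * map_poly of_int q"
  by (intro poly_eqI) (simp add: coeff_map_poly coeff_mult)

lemma map_poly_of_int_smult:
  "map_poly (of_int :: int \<Rightarrow> 'a::comm_ring_1) (smult c p) = smult (of_int c) (map_poly of_int p)"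
  by (intro poly_eqI) (simp add: coeff_map_poly)

lemma map_poly_of_int_inj:
  assumes "map_poly (of_int :: int \<Rightarrow> rat) p = map_poly of_int q"
  shows "p = q"
proof (intro poly_eqI)
  fix n
  have "coeff (map_poly (of_int :: int \<Rightarrow> rat) p) n = coeff (map_poly of_int q) n"
    using assms by simp
  then show "coeff p n = coeff q n" by (simp add: coeff_map_poly)
qed

lemma rat_poly_common_denom:
  "\<exists>c::int. c > 0 \<and> (\<exists>Q::int poly. map_poly of_int Q = smult (of_int c) (q::rat poly))"
proof (induction q rule: pCons_induct)
  case 0
  then show ?case by (intro exI[of _ 1]) (auto intro: exI[of _ 0])
next
  case (pCons a q)
  then obtain c Q where c: "c > 0" and Q: "map_poly of_int Q = smult (of_int c) q" by blast
  obtain u v where uv: "quotient_of a = (u, v)" by (cases "quotient_of a")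
  have a: "a = of_int u / of_int v" using uv by (rule quotient_of_div)
  have v: "v > 0" using uv by (rule quotient_of_denom_pos)
  have "map_poly of_int (pCons (c * u) (smult v Q)) = smult (of_int (c * v)) (pCons a q)"
    using v by (simp add: map_poly_pCons map_poly_of_int_smult Q a mult_ac)
  then show ?case using c v by (intro exI[of _ "c * v"]) (auto intro: mult_pos_pos)
qed

lemma content_monic:
  fixes p :: "int poly"
  assumes "lead_coeff p = 1"
  shows "content p = 1"
proof -
  have "content p dvd 1" using content_dvd_coeff[of p "degree p"] assms by simp
  hence "\<bar>content p\<bar> = 1" by simp
  moreover have "\<bar>content p\<bar> = content p" using normalize_content[of p] by simp
  ultimately show ?thesis by simp
qed

lemma content_nonneg: "content (p :: int poly) \<ge> 0"
proof -
  have "\<bar>content p\<bar> = content p" using normalize_content[of p] by simp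
  thus ?thesis by (metis abs_ge_zero)
qed

lemma gauss_monic:
  fixes p :: "int poly" and q s :: "rat poly"
  assumes eq: "map_poly of_int p = q * s" and lp: "lead_coeff p = 1" and lq: "lead_coeff q = 1"
  shows "coeff q i \<in> \<int>"
proof -
  have lmp: "lead_coeff (map_poly (of_int :: int \<Rightarrow> rat) p) = 1"
    using lp by (subst lead_coeff_map_poly_nz) auto
  have ls: "lead_coeff s = 1" using lmp lq unfolding eq by (simp add: lead_coeff_mult)
  obtain c1 Q where c1: "c1 > 0" and Q: "map_poly of_int Q = smult (of_int c1) q"
    using rat_poly_common_denom by blast
  obtain c2 S where c2: "c2 > 0" and S: "map_poly of_int S = smult (of_int c2) s"
    using rat_poly_common_denom by blast
  have "map_poly (of_int :: int \<Rightarrow> rat) (Q * S) = map_poly of_int (smult (c1 * c2) p)"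
    by (simp add: map_poly_of_int_mult map_poly_of_int_smult Q S eq mult_ac)
  hence QS: "Q * S = smult (c1 * c2) p" by (rule map_poly_of_int_inj)
  have "content Q * content S = content (Q * S)" by (simp add: content_mult)
  also have "\<dots> = c1 * c2"
    using QS c1 c2 content_monic[OF lp] by (simp add: abs_mult)
  finally have "content Q * content S = c1 * c2" .
  moreover have "coeff Q (degree q) = c1"
  proof -
    have "coeff (map_poly (of_int :: int \<Rightarrow> rat) Q) (degree q) = of_int c1"
      using lq by (simp add: Q)
    thus ?thesis by (simp add: coeff_map_poly)
  qed
  hence "content Q dvd c1" by (metis content_dvd_coeff)
  moreover have "coeff S (degree s) = c2"
  proof -
    have "coeff (map_poly (of_int :: int \<Rightarrow> rat) S) (degree s) = of_int c2"
      using ls by (simp add: S)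
    thus ?thesis by (simp add: coeff_map_poly)
  qed
  hence "content S dvd c2" by (metis content_dvd_coeff)
  moreover have "content Q \<ge> 0" "content S \<ge> 0"
    by (rule content_nonneg)+
  ultimately have cQ: "content Q = c1"
  proof -
    assume a: "content Q * content S = c1 * c2" "content Q dvd c1" "content S dvd c2"
      "content Q \<ge> 0" "content S \<ge> 0"
    have le1: "content Q \<le> c1" using a(2) c1 by (rule zdvd_imp_le)
    have le2: "content S \<le> c2" using a(3) c2 by (rule zdvd_imp_le)
    show ?thesis
    proof (rule ccontr)
      assume "content Q \<noteq> c1"
      hence lt: "content Q < c1" using le1 by simp
      have "content Q * content S \<le> content Q * c2" using le2 a(4) by (rule mult_left_mono)
      also have "\<dots> < c1 * c2" using lt c2 by (rule mult_strict_right_mono)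
      finally show False using a(1) by simp
    qed
  qed
  have "c1 dvd coeff Q i" using cQ by (metis content_dvd_coeff)
  then obtain t where t: "coeff Q i = c1 * t" by blast
  have "coeff (map_poly (of_int :: int \<Rightarrow> rat) Q) i = of_int c1 * coeff q i" by (simp add: Q)
  hence "of_int c1 * of_int t = of_int c1 * coeff q i" by (simp add: coeff_map_poly t)
  hence "coeff q i = of_int t" using c1 by simp
  thus ?thesis by simp
qed



lemma csqrt_not_rat:
  assumes "squarefree d" "d \<noteq> 1"
  shows "csqrt (of_int d) \<notin> \<rat>"
proof
  assume r: "csqrt (of_int d) \<in> \<rat>"
  have "algebraic_int (csqrt (of_int d))" by (intro algebraic_int_csqrt) simp
  hence "csqrt (of_int d) \<in> \<int>" using r by (rule rational_algebraic_int_is_int)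
  then obtain u where u: "csqrt (of_int d) = of_int u" by (elim Ints_cases)
  have "(of_int (u^2) :: complex) = of_int d" using power2_csqrt[of "of_int d"] by (simp add: u)
  hence ud: "u^2 = d" by (simp only: of_int_eq_iff)
  hence "u dvd 1" using assms(1) by (intro squarefreeD) auto
  hence "\<bar>u\<bar> = 1" by simp
  hence "u^2 = 1" by (metis abs_power2 power2_abs power_one)
  thus False using ud assms(2) by simp
qed

lemma quad_dvd:
  fixes P :: "rat poly" and r :: complex
  assumes r2: "r^2 = of_int d" and irr: "r \<notin> \<rat>" and b: "b \<noteq> 0"
    and ev: "poly (map_poly of_rat P) (of_rat a + of_rat b * r) = 0"
  shows "[:a^2 - of_int d * b^2, -2*a, 1:] dvd P"
proof -
  define q where "q = [:a^2 - of_int d * b^2, -2*a, 1:]"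
  define x where "x = of_rat a + of_rat b * r"
  have q0: "q \<noteq> 0" and dq: "degree q = 2" by (simp_all add: q_def)
  have evq: "poly (map_poly of_rat q) x = 0"
  proof -
    have "poly (map_poly of_rat q) x = of_rat (a^2 - of_int d * b^2) + x * (of_rat (-2*a) + x)"
      by (simp add: q_def map_poly_pCons)
    also have "\<dots> = of_rat b ^ 2 * (r^2 - of_int d)"
      by (simp add: x_def of_rat_add of_rat_mult of_rat_diff of_rat_minus of_rat_power power2_eq_square algebra_simps)
    also have "\<dots> = 0" by (simp add: r2)
    finally show ?thesis .
  qed
  define R where "R = P mod q"
  have PR: "P = q * (P div q) + R" by (simp add: R_def)
  have "poly (map_poly of_rat P) x = poly (map_poly of_rat q) x * poly (map_poly of_rat (P div q)) x
          + poly (map_poly of_rat R) x"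
    by (subst PR) (simp add: map_poly_of_rat_mult map_poly_of_rat_add)
  hence evR: "poly (map_poly of_rat R) x = 0" using ev evq by (simp add: x_def)
  have degR: "degree R \<le> 1"
    using degree_mod_less[OF q0, of P] dq by (auto simp: R_def)
  have Rf: "R = [:coeff R 0, coeff R 1:]"
  proof (rule poly_eqI)
    fix n show "coeff R n = coeff [:coeff R 0, coeff R 1:] n"
      using degR by (cases n; cases "n - 1") (auto simp: coeff_eq_0 coeff_pCons)
  qed
  have ev2: "of_rat (coeff R 0) + x * of_rat (coeff R 1) = (0::complex)"
    using evR by (subst (asm) Rf) (simp add: map_poly_pCons)
  have c1: "coeff R 1 = 0"
  proof (rule ccontr)
    assume c: "coeff R 1 \<noteq> 0"
    have "x = - of_rat (coeff R 0) / of_rat (coeff R 1)" using ev2 c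
      by (simp add: field_simps eq_neg_iff_add_eq_0 add.commute)
    hence "x \<in> \<rat>" by simp
    hence "(x - of_rat a) / of_rat b \<in> \<rat>" by simp
    moreover have "(x - of_rat a) / of_rat b = r" using b by (simp add: x_def)
    ultimately show False using irr by simp
  qed
  have "coeff R 0 = 0" using ev2 c1 by simp
  hence "R = 0" using Rf c1 by simp
  thus ?thesis by (simp add: R_def q_def mod_eq_0_iff_dvd)
qed



definition Aset :: "int \<Rightarrow> complex set" where
  "Aset d = {(of_int m + of_int k * csqrt (of_int d)) / 2 | m k. 4 dvd m^2 - d * k^2}"

lemma Aset_sub: "Aset d \<subseteq> ring_of_integers (quad_field d)"
proof
  fix x assume "x \<in> Aset d"
  then obtain m k where x: "x = (of_int m + of_int k * csqrt (of_int d)) / 2"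
    and dv: "4 dvd m^2 - d * k^2" unfolding Aset_def by blast
  obtain n where n: "m^2 - d * k^2 = 4 * n" using dv by blast
  have "x = of_rat (of_int m / 2) + of_rat (of_int k / 2) * csqrt (of_int d)"
    by (simp add: x of_rat_divide add_divide_distrib)
  hence "x \<in> quad_field d" unfolding quad_field_def by blast
  moreover have "algebraic_int x"
  proof (rule algebraic_int.intros[of "[:of_int n, - of_int m, 1:]"])
    show "lead_coeff [:of_int n, - of_int m, 1:] = (1::complex)" by simp
    show "\<forall>i. coeff [:of_int n, - of_int m, 1:] i \<in> \<int>"
      by (auto simp: coeff_pCons split: nat.splits)
    have "(of_int (4 * n) :: complex) = of_int m ^ 2 - of_int d * of_int k ^ 2"
      by (simp flip: n)
    hence "4 * of_int n = (of_int m ^ 2 - of_int d * of_int k ^ 2 :: complex)" by simp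
    moreover have "poly [:of_int n, - of_int m, 1:] x * 4 =
       4 * of_int n - of_int m ^ 2 + of_int k ^ 2 * (csqrt (of_int d))^2"
    proof -
      have "poly [:of_int n, - of_int m, 1:] x * 4 = 4 * of_int n + 4 * (x * (x - of_int m))"
        by (simp add: algebra_simps)
      also have "4 * (x * (x - of_int m)) = - (of_int m ^ 2) + of_int k ^ 2 * (csqrt (of_int d))^2"
        unfolding x by (simp add: field_simps power2_eq_square)
      finally show ?thesis by simp
    qed
    ultimately have "poly [:of_int n, - of_int m, 1:] x * 4 = 0" by simp
    thus "poly [:of_int n, - of_int m, 1:] x = 0" by (simp only: mult_eq_0_iff) simp
  qed
  ultimately show "x \<in> ring_of_integers (quad_field d)" unfolding ring_of_integers_def by blast
qed

lemma rat_sq_int: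
  fixes c :: rat
  assumes "squarefree d" "of_int d * c^2 \<in> \<int>"
  shows "c \<in> \<int>"
proof -
  obtain u v where uv: "quotient_of c = (u, v)" by (cases "quotient_of c")
  have c: "c = of_int u / of_int v" using uv by (rule quotient_of_div)
  have v: "v > 0" using uv by (rule quotient_of_denom_pos)
  have cop: "coprime u v" using uv by (rule quotient_of_coprime)
  obtain n where n: "of_int d * c^2 = of_int n" using assms(2) by (elim Ints_cases)
  have "of_int (d * u^2) = (of_int (n * v^2) :: rat)"
    using n v by (simp add: c field_simps)
  hence e: "d * u^2 = n * v^2" by (simp only: of_int_eq_iff)
  have "v^2 dvd d * u^2" by (simp add: e)
  moreover have "coprime (v^2) (u^2)" using cop by (simp add: coprime_commute)
  ultimately have "v^2 dvd d" by (simp add: coprime_dvd_mult_left_iff)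
  hence "v dvd 1" using assms(1) by (intro squarefreeD)
  hence "v = 1" using v by simp
  thus ?thesis by (simp add: c)
qed

lemma ring_sub:
  assumes sf: "squarefree d" and d1: "d \<noteq> 1"
  shows "ring_of_integers (quad_field d) \<subseteq> Aset d"
proof
  fix x assume "x \<in> ring_of_integers (quad_field d)"
  then obtain a b where x: "x = of_rat a + of_rat b * csqrt (of_int d)" and ai: "algebraic_int x"
    unfolding ring_of_integers_def quad_field_def by blast
  define r where "r = csqrt (of_int d :: complex)"
  have irr: "r \<notin> \<rat>" unfolding r_def using sf d1 by (rule csqrt_not_rat)
  have r2: "r^2 = of_int d" by (simp add: r_def)
  show "x \<in> Aset d"
  proof (cases "b = 0")
    case True
    hence "x \<in> \<rat>" by (simp add: x)
    hence "x \<in> \<int>" using ai by (intro rational_algebraic_int_is_int)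
    then obtain n where n: "x = of_int n" by (elim Ints_cases)
    have "x = (of_int (2*n) + of_int 0 * csqrt (of_int d)) / 2" by (simp add: n)
    moreover have "(4::int) dvd (2*n)^2 - d * 0^2" by (simp add: power2_eq_square)
    ultimately show ?thesis unfolding Aset_def by blast
  next
    case False
    obtain p where p: "poly (map_poly of_int p) x = 0" "lead_coeff p = 1"
      using ai by (auto simp: algebraic_int_altdef_ipoly)
    define P where "P = map_poly (of_int :: int \<Rightarrow> rat) p"
    have "map_poly (of_rat :: rat \<Rightarrow> complex) P = map_poly of_int p"
      by (simp add: P_def map_poly_map_poly o_def)
    hence "poly (map_poly of_rat P) (of_rat a + of_rat b * r) = 0" using p by (simp add: x r_def)
    hence "[:a^2 - of_int d * b^2, -2*a, 1:] dvd P" using r2 irr False by (intro quad_dvd)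
    then obtain s where s: "P = [:a^2 - of_int d * b^2, -2*a, 1:] * s" by (elim dvdE)
    have g: "coeff [:a^2 - of_int d * b^2, -2*a, 1:] i \<in> \<int>" for i
    proof (rule gauss_monic[of p _ s])
      show "map_poly of_int p = [:a^2 - of_int d * b^2, -2*a, 1:] * s" using s unfolding P_def .
    qed (simp_all add: p(2))
    have i0: "a^2 - of_int d * b^2 \<in> \<int>" using g[of 0] by simp
    have i1: "-2*a \<in> \<int>" using g[of 1] by simp
    then obtain m0 where m0: "-2 * a = of_int m0" by (elim Ints_cases)
    define m where "m = - m0"
    have m: "2 * a = of_int m" using m0 unfolding m_def by (simp add: algebra_simps)
    obtain n where n: "a^2 - of_int d * b^2 = of_int n" using i0 by (elim Ints_cases)
    have "of_int d * (2*b)^2 = (2*a)^2 - 4 * (a^2 - of_int d * b^2)"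
      by (simp add: algebra_simps power2_eq_square)
    also have "\<dots> = of_int m ^ 2 - 4 * of_int n" by (simp only: m n)
    also have "\<dots> = of_int (m^2 - 4 * n)" by simp
    finally have "of_int d * (2*b)^2 = of_int (m^2 - 4 * n)" .
    hence "of_int d * (2*b)^2 \<in> \<int>" by simp
    hence "2*b \<in> \<int>" by (rule rat_sq_int[OF sf])
    then obtain k where k: "2 * b = of_int k" by (elim Ints_cases)
    have "of_int (m^2 - d * k^2) = (of_int m)^2 - of_int d * (of_int k)^2" by simp
    also have "\<dots> = (2*a)^2 - of_int d * (2*b)^2" by (simp only: m k)
    also have "\<dots> = 4 * (a^2 - of_int d * b^2)" by (simp add: algebra_simps power2_eq_square)
    also have "\<dots> = 4 * of_int n" by (simp only: n)
    also have "\<dots> = of_int (4*n)" by simp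
    finally have "of_int (m^2 - d * k^2) = (of_int (4*n) :: rat)" .
    hence "m^2 - d*k^2 = 4 * n" by (simp only: of_int_eq_iff)
    hence dv: "4 dvd m^2 - d*k^2" by simp
    have ha: "a = of_int m / 2" and hb: "b = of_int k / 2" using m k by simp_all
    have "x = of_rat (of_int m / 2) + of_rat (of_int k / 2) * csqrt (of_int d)"
      by (simp only: x ha hb)
    hence "x = (of_int m + of_int k * csqrt (of_int d)) / 2"
      by (simp add: of_rat_divide add_divide_distrib)
    thus ?thesis using dv unfolding Aset_def by blast
  qed
qed

lemma OK_char:
  assumes "squarefree d" "d \<noteq> 1"
  shows "ring_of_integers (quad_field d) = Aset d"
  using Aset_sub ring_sub[OF assms] by blast



definition ee :: "int \<Rightarrow> int \<Rightarrow> int \<Rightarrow> complex" where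
  "ee d m k = (of_int m + of_int k * csqrt (of_int d)) / 2"

lemma Aset_ee: "Aset d = {ee d m k | m k. 4 dvd m^2 - d * k^2}"
  by (simp add: Aset_def ee_def)

lemma lin_inj:
  assumes sf: "squarefree d" and d1: "d \<noteq> 1"
    and eq: "of_int u + of_int v * csqrt (of_int d) = of_int u' + of_int v' * (csqrt (of_int d) :: complex)"
  shows "u = u' \<and> v = v'"
proof -
  have irr: "csqrt (of_int d) \<notin> \<rat>" using sf d1 by (rule csqrt_not_rat)
  have v: "v = v'"
  proof (rule ccontr)
    assume "v \<noteq> v'"
    hence nz: "(of_int v - of_int v' :: complex) \<noteq> 0" by simp
    have "(of_int v - of_int v') * csqrt (of_int d) = (of_int u' - of_int u :: complex)"
      using eq by (simp add: algebra_simps)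
    hence "csqrt (of_int d) = (of_int u' - of_int u) / (of_int v - of_int v' :: complex)"
      using nz by (simp add: field_simps)
    hence "csqrt (of_int d) \<in> \<rat>" by simp
    thus False using irr by simp
  qed
  thus ?thesis using eq by simp
qed

lemma ee_inj:
  assumes "squarefree d" "d \<noteq> 1" "ee d m k = ee d m' k'"
  shows "m = m' \<and> k = k'"
proof (rule lin_inj[OF assms(1,2)])
  have "of_int m + of_int k * csqrt (of_int d) = 2 * ee d m k" by (simp add: ee_def)
  also have "\<dots> = 2 * ee d m' k'" by (simp add: assms(3))
  also have "\<dots> = of_int m' + of_int k' * csqrt (of_int d)" by (simp add: ee_def)
  finally show "of_int m + of_int k * csqrt (of_int d) = of_int m' + of_int k' * (csqrt (of_int d) :: complex)" .
qed

lemma csq: "csqrt (of_int d) * csqrt (of_int d) = (of_int d :: complex)"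
  using power2_csqrt[of "of_int d"] by (simp add: power2_eq_square)

lemma ee_mult:
  "ee d m k * ee d m' k' =
     (of_int (m*m' + d*k*k') + of_int (m*k' + m'*k) * csqrt (of_int d)) / 4"
proof -
  have "ee d m k * ee d m' k' = (of_int m * of_int m' + of_int k * of_int k' * (csqrt (of_int d) * csqrt (of_int d))
      + (of_int m * of_int k' + of_int m' * of_int k) * csqrt (of_int d)) / 4"
    by (simp add: ee_def field_simps)
  also have "\<dots> = (of_int (m*m' + d*k*k') + of_int (m*k' + m'*k) * csqrt (of_int d)) / 4"
    by (simp only: csq) (simp add: algebra_simps)
  finally show ?thesis .
qed

lemma par:
  fixes m k d :: int
  assumes "4 dvd m^2 - d * k^2"
  shows "even m \<longleftrightarrow> even d \<or> even k"
proof -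
  have "even (m^2 - d * k^2)" using assms by (metis dvd_trans even_numeral)
  hence "even (m^2 + d * k^2)" by (simp only: even_diff)
  hence "even (m^2) \<longleftrightarrow> even (d * k^2)" by (simp only: even_add)
  thus ?thesis by (auto simp: even_mult_iff)
qed

lemma A_mult:
  assumes "x \<in> Aset d" "y \<in> Aset d"
  shows "x * y \<in> Aset d"
proof -
  obtain m k where x: "x = ee d m k" and dx: "4 dvd m^2 - d * k^2" using assms(1) unfolding Aset_ee by blast
  obtain m' k' where y: "y = ee d m' k'" and dy: "4 dvd m'^2 - d * k'^2" using assms(2) unfolding Aset_ee by blast
  have p1: "even m \<longleftrightarrow> even d \<or> even k" using dx by (rule par)
  have p2: "even m' \<longleftrightarrow> even d \<or> even k'" using dy by (rule par)
  have "even (m*m' + d*k*k')" using p1 p2 by (auto simp: even_mult_iff)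
  then obtain M where M: "m*m' + d*k*k' = 2 * M" by blast
  have "even (m*k' + m'*k)" using p1 p2 by (auto simp: even_mult_iff)
  then obtain K where K: "m*k' + m'*k = 2 * K" by blast
  obtain n where n: "m^2 - d * k^2 = 4 * n" using dx by blast
  obtain n' where n': "m'^2 - d * k'^2 = 4 * n'" using dy by blast
  have "x * y = (of_int (2*M) + of_int (2*K) * csqrt (of_int d)) / 4"
    by (simp only: x y ee_mult M K)
  also have "\<dots> = ee d M K" by (simp add: ee_def field_simps)
  finally have xy: "x * y = ee d M K" .
  have "4 * (M^2 - d*K^2) = (2*M)^2 - d*(2*K)^2" by (simp add: power2_eq_square algebra_simps)
  also have "\<dots> = (m*m' + d*k*k')^2 - d*(m*k' + m'*k)^2" by (simp only: M K)
  also have "\<dots> = (m^2 - d * k^2) * (m'^2 - d * k'^2)" by (simp add: power2_eq_square algebra_simps)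
  also have "\<dots> = 4 * (4 * n * n')" by (simp add: n n')
  finally have "M^2 - d*K^2 = 4 * (n * n')" by simp
  hence "4 dvd M^2 - d*K^2" by simp
  thus ?thesis using xy unfolding Aset_ee by blast
qed

lemma A_add:
  assumes "x \<in> Aset d" "y \<in> Aset d"
  shows "x + y \<in> Aset d"
proof -
  obtain m k where x: "x = ee d m k" and dx: "4 dvd m^2 - d * k^2" using assms(1) unfolding Aset_ee by blast
  obtain m' k' where y: "y = ee d m' k'" and dy: "4 dvd m'^2 - d * k'^2" using assms(2) unfolding Aset_ee by blast
  have p1: "even m \<longleftrightarrow> even d \<or> even k" using dx by (rule par)
  have p2: "even m' \<longleftrightarrow> even d \<or> even k'" using dy by (rule par)
  have "even (m*m' - d*k*k')" using p1 p2 by (auto simp: even_mult_iff)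
  then obtain M where M: "m*m' - d*k*k' = 2 * M" by blast
  obtain n where n: "m^2 - d * k^2 = 4 * n" using dx by blast
  obtain n' where n': "m'^2 - d * k'^2 = 4 * n'" using dy by blast
  have xy: "x + y = ee d (m+m') (k+k')" by (simp add: x y ee_def field_simps)
  have "(m+m')^2 - d*(k+k')^2 = (m^2 - d * k^2) + (m'^2 - d * k'^2) + 2 * (m*m' - d*k*k')"
    by (simp add: power2_eq_square algebra_simps)
  also have "\<dots> = 4 * (n + n' + M)" by (simp add: n n' M)
  finally have "4 dvd (m+m')^2 - d*(k+k')^2" by simp
  thus ?thesis using xy unfolding Aset_ee by blast
qed

lemma A_uminus:
  assumes "x \<in> Aset d"
  shows "- x \<in> Aset d"
proof -
  obtain m k where x: "x = ee d m k" and dx: "4 dvd m^2 - d * k^2" using assms(1) unfolding Aset_ee by blast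
  have "- x = ee d (-m) (-k)" by (simp add: x ee_def field_simps)
  moreover have "4 dvd (-m)^2 - d * (-k)^2" using dx by simp
  ultimately show ?thesis unfolding Aset_ee by blast
qed

lemma A_diff: "x \<in> Aset d \<Longrightarrow> y \<in> Aset d \<Longrightarrow> x - y \<in> Aset d"
  using A_add[of x d "-y"] A_uminus[of y d] by simp

lemma A_int: "of_int c \<in> Aset d"
proof -
  have "of_int c = ee d (2*c) 0" by (simp add: ee_def)
  moreover have "(4::int) dvd (2*c)^2 - d * 0^2" by (simp add: power2_eq_square)
  ultimately show ?thesis unfolding Aset_ee by blast
qed

lemma A_1: "1 \<in> Aset d" using A_int[of 1 d] by simp

lemma A_conj: "4 dvd m^2 - d * k^2 \<Longrightarrow> ee d m (-k) \<in> Aset d"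
  unfolding Aset_ee by force

lemma ee_in: "4 dvd m^2 - d * k^2 \<Longrightarrow> ee d m k \<in> Aset d"
  unfolding Aset_ee by force

lemma ee_norm: "ee d m k * ee d m (-k) = of_int (m^2 - d*k^2) / 4"
  by (simp add: ee_mult power2_eq_square)



lemma sum_pow_split:
  fixes X :: complex
  assumes "finite J"
  shows "(\<Sum>j\<in>J. X^j) = (if 0 \<in> J then 1 else 0) + X * (\<Sum>j\<in>Suc -` J. X^j)"
proof -
  have fin: "finite (Suc -` J)" using assms by (intro finite_vimageI) auto
  have J: "J = (J \<inter> {0}) \<union> Suc ` (Suc -` J)"
    by (auto simp: image_iff) (metis not0_implies_Suc)
  have "(\<Sum>j\<in>J. X^j) = (\<Sum>j\<in>J \<inter> {0}. X^j) + (\<Sum>j\<in>Suc ` (Suc -` J). X^j)"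
    by (subst J, rule sum.union_disjoint) (use assms fin in auto)
  also have "(\<Sum>j\<in>Suc ` (Suc -` J). X^j) = (\<Sum>j\<in>Suc -` J. X^(Suc j))"
    by (subst sum.reindex) auto
  also have "\<dots> = X * (\<Sum>j\<in>Suc -` J. X^j)" by (simp add: sum_distrib_left)
  also have "(\<Sum>j\<in>J \<inter> {0}. X^j) = (if 0 \<in> J then 1 else 0)" by auto
  finally show ?thesis .
qed

lemma pow_A: "X \<in> Aset d \<Longrightarrow> X ^ n \<in> Aset d"
  by (induction n) (auto intro: A_mult A_1)

lemma sum_pow_A:
  assumes "X \<in> Aset d" "finite J"
  shows "(\<Sum>j\<in>J. X^j) \<in> Aset d"
  using assms(2)
proof (induction J rule: finite_induct)
  case empty then show ?case using A_int[of 0 d] by simp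
next
  case (insert x F) then show ?case using pow_A[OF assms(1)] by (auto intro: A_add)
qed

lemma Sgen_nonunit:
  assumes S: "S_generator (Aset d) X" and z: "z \<in> Aset d"
  shows "1 \<noteq> X * z"
proof
  assume 1: "1 = X * z"
  obtain J where J: "finite J" "z = (\<Sum>j\<in>J. X^j)" using S z unfolding S_generator_def by blast
  have "X * z = (\<Sum>j\<in>J. X^(Suc j))" by (simp add: J sum_distrib_left)
  also have "\<dots> = (\<Sum>j\<in>Suc ` J. X^j)" by (subst sum.reindex) auto
  finally have e1: "1 = (\<Sum>j\<in>Suc ` J. X^j)" using 1 by simp
  have e2: "1 = (\<Sum>j\<in>{0::nat}. X^j)" by simp
  have "\<exists>!J::nat set. finite J \<and> 1 = (\<Sum>j\<in>J. X ^ j)" using S A_1[of d] unfolding S_generator_def by blast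
  hence "Suc ` J = {0}" using e1 e2 J(1) by blast
  thus False by (metis Zero_not_Suc imageE singletonI)
qed

lemma Sgen_dec:
  assumes S: "S_generator (Aset d) X" and y: "y \<in> Aset d"
  shows "\<exists>z\<in>Aset d. y = X * z \<or> y = 1 + X * z"
proof -
  obtain J where J: "finite J" "y = (\<Sum>j\<in>J. X^j)" using S y unfolding S_generator_def by blast
  have X: "X \<in> Aset d" using S unfolding S_generator_def by blast
  have "finite (Suc -` J)" using J(1) by (intro finite_vimageI) auto
  hence "(\<Sum>j\<in>Suc -` J. X^j) \<in> Aset d" using X by (intro sum_pow_A)
  moreover have "y = (if 0 \<in> J then 1 else 0) + X * (\<Sum>j\<in>Suc -` J. X^j)"
    using J by (simp add: sum_pow_split)
  ultimately show ?thesis by (cases "0 \<in> J") auto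
qed

lemma ee_lin: "of_int c + of_int t * ee d p q = ee d (2*c + t*p) (t*q)"
  by (simp add: ee_def field_simps)

lemma int_dvd4_cases:
  fixes N :: int
  assumes "N dvd 4"
  shows "N = 1 \<or> N = -1 \<or> N = 2 \<or> N = -2 \<or> N = 4 \<or> N = -4"
proof -
  have "\<bar>N\<bar> \<le> 4" using dvd_imp_le_int[of 4 N] assms by simp
  hence "N \<in> {-4..4}" by auto
  moreover have "N \<noteq> 0" "N \<noteq> 3" "N \<noteq> -3" using assms by auto
  ultimately show ?thesis by auto
qed

lemma norm_cases:
  assumes sf: "squarefree d" and d1: "d \<noteq> 1" and S: "S_generator (Aset d) X"
    and X: "X = ee d m k" and N: "m^2 - d * k^2 = 4 * N"
  shows "N = 2 \<or> N = -2"
proof -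
  have A2: "2 \<in> Aset d" using A_int[of 2 d] by simp
  obtain z where z: "z \<in> Aset d" and "2 = X * z \<or> 2 = 1 + X * z" using Sgen_dec[OF S A2] by blast
  moreover have "2 \<noteq> 1 + X * z" using Sgen_nonunit[OF S z] by (auto simp: algebra_simps)
  ultimately have 2: "2 = X * z" by blast
  obtain m' k' where z': "z = ee d m' k'" and dz: "4 dvd m'^2 - d * k'^2" using z unfolding Aset_ee by blast
  obtain N' where N': "m'^2 - d * k'^2 = 4 * N'" using dz by blast
  have "of_int 8 + of_int 0 * csqrt (of_int d) = 4 * (X * z)" using 2 by simp
  also have "\<dots> = of_int (m*m' + d*k*k') + of_int (m*k' + m'*k) * csqrt (of_int d)"
    by (simp add: X z' ee_mult)
  finally have "8 = m*m' + d*k*k' \<and> 0 = m*k' + m'*k" by (rule lin_inj[OF sf d1])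
  hence e1: "m*m' + d*k*k' = 8" and e2: "m*k' + m'*k = 0" by auto
  have "16 * (N * N') = (m^2 - d * k^2) * (m'^2 - d * k'^2)" by (simp add: N N')
  also have "\<dots> = (m*m' + d*k*k')^2 - d * (m*k' + m'*k)^2" by (simp add: power2_eq_square algebra_simps)
  also have "\<dots> = 64" by (simp add: e1 e2)
  finally have NN: "N * N' = 4" by simp
  hence "N dvd 4" by (metis dvd_triv_left)
  hence cs: "N = 1 \<or> N = -1 \<or> N = 2 \<or> N = -2 \<or> N = 4 \<or> N = -4" by (rule int_dvd4_cases)
  have dX: "4 dvd m^2 - d * k^2" using N by simp
  have n1: False if "N = 1 \<or> N = -1"
  proof -
    define w where "w = of_int N * ee d m (-k)"
    have w: "w \<in> Aset d" unfolding w_def by (intro A_mult A_int A_conj dX)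
    have "X * w = of_int N * (ee d m k * ee d m (-k))" by (simp add: X w_def algebra_simps)
    also have "\<dots> = of_int N * (of_int (4 * N) / 4)" by (simp only: ee_norm N)
    also have "\<dots> = of_int (N * N)" by simp
    also have "N * N = 1" using that by auto
    finally have "1 = X * w" by simp
    thus False using Sgen_nonunit[OF S w] by simp
  qed
  have n4: False if "N = 4 \<or> N = -4"
  proof -
    have "N' = 1 \<or> N' = -1" using that NN by (auto; presburger)
    hence N'1: "N' * N' = 1" by auto
    define u where "u = of_int N' * ee d m' (-k')"
    have u: "u \<in> Aset d" unfolding u_def by (intro A_mult A_int A_conj dz)
    have "z * u = of_int N' * (ee d m' k' * ee d m' (-k'))" by (simp add: z' u_def algebra_simps)
    also have "\<dots> = of_int N' * (of_int (4 * N') / 4)" by (simp only: ee_norm N')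
    also have "\<dots> = of_int (N' * N')" by simp
    finally have zu: "z * u = 1" using N'1 by simp
    have X2: "X = 2 * u" using 2 zu by (metis mult.assoc mult.commute mult_1)
    have dec: "\<exists>v\<in>Aset d. y = 2 * v \<or> y = 1 + 2 * v" if yA: "y \<in> Aset d" for y
    proof -
      obtain w where w: "w \<in> Aset d" "y = X * w \<or> y = 1 + X * w" using Sgen_dec[OF S yA] by blast
      have "u * w \<in> Aset d" using u w(1) by (rule A_mult)
      thus ?thesis using w(2) by (auto simp: X2 mult.assoc)
    qed
    have sh: "\<exists>p q. 4 dvd p^2 - d * q^2 \<and> ((a = 2*p \<and> b = 2*q) \<or> (a = 2 + 2*p \<and> b = 2*q))"
      if "4 dvd a^2 - d * b^2" for a b
    proof -
      note ab = that
      obtain v where v: "v \<in> Aset d" "ee d a b = 2 * v \<or> ee d a b = 1 + 2 * v"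
        using dec[OF ee_in[OF ab]] by blast
      obtain p q where pq: "v = ee d p q" "4 dvd p^2 - d * q^2" using v(1) unfolding Aset_ee by blast
      have "2 * v = ee d (2*p) (2*q)" using ee_lin[of 0 2 d p q] by (simp add: pq)
      moreover have "1 + 2 * v = ee d (2 + 2*p) (2*q)" using ee_lin[of 1 2 d p q] by (simp add: pq)
      ultimately have "(a = 2*p \<and> b = 2*q) \<or> (a = 2 + 2*p \<and> b = 2*q)"
        using v(2) ee_inj[OF sf d1] by metis
      thus ?thesis using pq(2) by blast
    qed
    have "4 dvd (0::int)^2 - d * 2^2" by simp
    from sh[OF this] obtain p q where pq: "4 dvd p^2 - d * q^2"
      "(0 = 2*p \<and> 2 = 2*q) \<or> (0 = 2 + 2*p \<and> 2 = (2::int)*q)" by blast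
    show False
    proof (cases "0 = 2*p")
      case True
      hence "p = 0" "q = 1" using pq(2) by auto
      hence "2^2 dvd d" using pq(1) by simp
      hence "(2::int) dvd 1" by (rule squarefreeD[OF sf])
      thus False by simp
    next
      case False
      hence "p = -1" "q = 1" using pq(2) by auto
      hence d41: "4 dvd (1::int)^2 - d * 1^2" using pq(1) by simp
      from sh[OF d41] obtain p' q' :: int where
        "(1 = 2*p' \<and> 1 = 2*q') \<or> (1 = 2 + 2*p' \<and> (1::int) = 2*q')" by blast
      thus False by presburger
    qed
  qed
  show ?thesis using cs n1 n4 by blast
qed

lemma neg_arith:
  fixes d m k :: int
  assumes "d < 0" "squarefree d" "m^2 - d * k^2 = 8"
  shows "d = -1 \<or> d = -2 \<or> d = -7"
proof -
  have mk: "m^2 \<le> 8" "- d * k^2 \<le> 8" using assms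
    by (smt (verit) mult_nonneg_nonneg zero_le_power2 mult_minus_left)+
  have "\<bar>m\<bar> \<le> 2"
  proof (rule ccontr)
    assume "\<not> \<bar>m\<bar> \<le> 2" hence "3 \<le> \<bar>m\<bar>" by simp
    hence "3^2 \<le> \<bar>m\<bar>^2" by (intro power_mono) auto
    thus False using mk(1) by simp
  qed
  have k0: "k \<noteq> 0"
  proof
    assume "k = 0" hence "m^2 = 8" using assms(3) by simp
    moreover have "m = -2 \<or> m = -1 \<or> m = 0 \<or> m = 1 \<or> m = 2" using \<open>\<bar>m\<bar> \<le> 2\<close> by arith
    ultimately show False by (auto simp: power2_eq_square)
  qed
  hence "1 \<le> k^2" by (simp add: power2_eq_square) (metis abs_mult_self_eq mult_le_cancel_left1 zero_less_abs_iff int_one_le_iff_zero_less abs_ge_zero dual_order.trans mult_left_mono abs_mult not_le)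
  hence "- d * 1 \<le> - d * k^2" using assms(1) by (intro mult_left_mono) auto
  hence dge: "-8 \<le> d" using mk(2) by simp
  have "k^2 \<le> 8"
  proof -
    have "1 * k^2 \<le> - d * k^2" using assms(1) by (intro mult_right_mono) auto
    thus ?thesis using mk(2) by simp
  qed
  have "\<bar>k\<bar> \<le> 2"
  proof (rule ccontr)
    assume "\<not> \<bar>k\<bar> \<le> 2" hence "3 \<le> \<bar>k\<bar>" by simp
    hence "3^2 \<le> \<bar>k\<bar>^2" by (intro power_mono) auto
    thus False using \<open>k^2 \<le> 8\<close> by simp
  qed
  have d4: "d \<noteq> -4" "d \<noteq> -8"
  proof -
    show "d \<noteq> -4"
    proof assume "d = -4" hence "2^2 dvd d" by simp
      hence "(2::int) dvd 1" by (rule squarefreeD[OF assms(2)]) thus False by simp qed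
    show "d \<noteq> -8"
    proof assume "d = -8" hence "2^2 dvd d" by simp
      hence "(2::int) dvd 1" by (rule squarefreeD[OF assms(2)]) thus False by simp qed
  qed
  have "d \<in> {-8..-1}" "m \<in> {-2..2}" "k \<in> {-2..2}" using dge assms(1) \<open>\<bar>m\<bar> \<le> 2\<close> \<open>\<bar>k\<bar> \<le> 2\<close> by auto
  hence "d \<in> {-8,-7,-6,-5,-4,-3,-2,-1}" "m \<in> {-2,-1,0,1,2}" "k \<in> {-2,-1,0,1,2}"
    by (auto simp: atLeastAtMost_iff)
  thus ?thesis using assms(3) d4 by (auto simp: power2_eq_square)
qed



lemma quad_root:
  fixes r :: complex
  assumes r2: "r^2 = of_int d"
  shows "poly (map_poly of_rat [:a^2 - of_int d * b^2, -2*a, 1:]) (of_rat a + of_rat b * r) = 0"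
proof -
  define x where "x = of_rat a + of_rat b * r"
  have "poly (map_poly of_rat [:a^2 - of_int d * b^2, -2*a, 1:]) x
      = of_rat (a^2 - of_int d * b^2) + x * (of_rat (-2*a) + x)"
    by (simp add: map_poly_pCons)
  also have "\<dots> = of_rat b ^ 2 * (r^2 - of_int d)"
    by (simp add: x_def of_rat_add of_rat_mult of_rat_diff of_rat_minus of_rat_power power2_eq_square algebra_simps)
  also have "\<dots> = 0" by (simp add: r2)
  finally show ?thesis by (simp add: x_def)
qed

lemma of_rat_if': "(of_rat (if P then a else b) :: 'a::field_char_0) = (if P then of_rat a else of_rat b)"
  by simp

lemma map_sum_monom:
  "map_poly (of_rat :: rat \<Rightarrow> complex) (\<Sum>j\<in>J. monom 1 j) = (\<Sum>j\<in>J. monom 1 j)"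
proof (cases "finite J")
  case True
  then show ?thesis
    by (induction J rule: finite_induct) (simp_all add: map_poly_of_rat_add map_poly_monom)
qed simp

lemma poly_sum_monom:
  "poly (map_poly (of_rat :: rat \<Rightarrow> complex) ((\<Sum>j\<in>J. monom 1 j) - [:of_int c:])) x
     = (\<Sum>j\<in>J. x^j) - of_int c"
proof -
  have "map_poly (of_rat :: rat \<Rightarrow> complex) ((\<Sum>j\<in>J. monom 1 j) - [:of_int c:])
        = map_poly of_rat (\<Sum>j\<in>J. monom 1 j) - [:of_int c:]"
    by (intro poly_eqI) (simp add: coeff_map_poly of_rat_diff coeff_pCons split: nat.split)
  thus ?thesis by (simp add: map_sum_monom poly_sum poly_monom)
qed

lemma conj_sum:
  assumes sf: "squarefree d" and d1: "d \<noteq> 1" and k: "k \<noteq> 0"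
    and eq: "(\<Sum>j\<in>J. (ee d m k)^j) = of_int c"
  shows "(\<Sum>j\<in>J. (ee d m (-k))^j) = of_int c"
proof -
  define r where "r = csqrt (of_int d :: complex)"
  define a where "a = (of_int m / 2 :: rat)"
  define b where "b = (of_int k / 2 :: rat)"
  define P where "P = (\<Sum>j\<in>J. monom (1::rat) j) - [:of_int c:]"
  have irr: "r \<notin> \<rat>" unfolding r_def using sf d1 by (rule csqrt_not_rat)
  have r2: "r^2 = of_int d" by (simp add: r_def)
  have b0: "b \<noteq> 0" using k by (simp add: b_def)
  have x1: "ee d m k = of_rat a + of_rat b * r"
    by (simp add: ee_def a_def b_def r_def of_rat_divide add_divide_distrib)
  have x2: "ee d m (-k) = of_rat a + of_rat (-b) * r"
    by (simp add: ee_def a_def b_def r_def of_rat_divide add_divide_distrib of_rat_minus)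
  have "poly (map_poly of_rat P) (of_rat a + of_rat b * r) = 0"
    unfolding P_def poly_sum_monom using eq by (simp add: x1)
  hence "[:a^2 - of_int d * b^2, -2*a, 1:] dvd P" using r2 irr b0 by (intro quad_dvd)
  then obtain s where s: "P = [:a^2 - of_int d * b^2, -2*a, 1:] * s" by (elim dvdE)
  have "poly (map_poly of_rat [:a^2 - of_int d * (-b)^2, -2*a, 1:]) (of_rat a + of_rat (-b) * r) = 0"
    using r2 by (rule quad_root)
  moreover have "poly (map_poly of_rat P) (of_rat a + of_rat (-b) * r) =
     poly (map_poly of_rat [:a^2 - of_int d * b^2, -2*a, 1:]) (of_rat a + of_rat (-b) * r) *
     poly (map_poly of_rat s) (of_rat a + of_rat (-b) * r)"
    by (simp only: s map_poly_of_rat_mult poly_mult)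
  ultimately have "poly (map_poly of_rat P) (of_rat a + of_rat (-b) * r) = 0" by simp
  hence "(\<Sum>j\<in>J. (ee d m (-k))^j) - of_int c = 0"
    unfolding P_def poly_sum_monom x2 .
  thus ?thesis by simp
qed

lemma geom_bound:
  fixes t :: real
  assumes "\<bar>t\<bar> < 1" "finite J"
  shows "(\<Sum>j\<in>J. t^j) \<le> 1 / (1 - \<bar>t\<bar>)"
proof -
  have "(\<Sum>j\<in>J. t^j) \<le> (\<Sum>j\<in>J. \<bar>t\<bar>^j)"
    by (intro sum_mono) (metis abs_ge_self power_abs)
  also have "\<dots> \<le> (\<Sum>n. \<bar>t\<bar>^n)"
    using assms by (intro sum_le_suminf summable_geometric) auto
  also have "\<dots> = 1 / (1 - \<bar>t\<bar>)" using assms by (intro suminf_geometric) auto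
  finally show ?thesis .
qed

lemma sq_ne_8: "(m::int)^2 \<noteq> 8"
proof
  assume m: "m^2 = 8"
  have "\<bar>m\<bar> \<le> 2"
  proof (rule ccontr)
    assume "\<not> \<bar>m\<bar> \<le> 2" hence "3 \<le> \<bar>m\<bar>" by simp
    hence "3^2 \<le> \<bar>m\<bar>^2" by (intro power_mono) auto
    thus False using m by simp
  qed
  hence "m = -2 \<or> m = -1 \<or> m = 0 \<or> m = 1 \<or> m = 2" by arith
  thus False using m by (auto simp: power2_eq_square)
qed

lemma pos_case:
  assumes sf: "squarefree d" and d1: "d \<noteq> 1" and dpos: "d > 0" and S: "S_generator (Aset d) X"
  shows False
proof -
  have "X \<in> Aset d" using S unfolding S_generator_def by blast
  then obtain m k where X: "X = ee d m k" and dX: "4 dvd m^2 - d * k^2" unfolding Aset_ee by blast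
  obtain N where N: "m^2 - d * k^2 = 4 * N" using dX by blast
  have N2: "N = 2 \<or> N = -2" using norm_cases[OF sf d1 S X N] .
  have k0: "k \<noteq> 0"
  proof
    assume "k = 0"
    hence "m^2 = 8 \<or> m^2 = -8" using N N2 by auto
    moreover have "m^2 \<ge> 0" by simp
    ultimately show False using sq_ne_8[of m] by auto
  qed
  define s where "s = sqrt (real_of_int d)"
  have cs: "csqrt (of_int d) = complex_of_real s"
    unfolding s_def using dpos by (subst csqrt_of_real_nonneg) auto
  have s2: "s^2 = real_of_int d" unfolding s_def using dpos by simp
  define x where "x = (real_of_int m + real_of_int k * s) / 2"
  define x' where "x' = (real_of_int m - real_of_int k * s) / 2"
  have ex: "ee d m k = complex_of_real x" by (simp add: ee_def cs x_def)
  have ex': "ee d m (-k) = complex_of_real x'" by (simp add: ee_def cs x'_def)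
  have rs: "\<exists>J. finite J \<and> (\<Sum>j\<in>J. x^j) = of_int c \<and> (\<Sum>j\<in>J. x'^j) = of_int c" for c
  proof -
    obtain J where J: "finite J" "of_int c = (\<Sum>j\<in>J. X^j)"
      using S A_int[of c d] unfolding S_generator_def by blast
    have e1: "(\<Sum>j\<in>J. (ee d m k)^j) = of_int c" using J by (simp add: X)
    have e2: "(\<Sum>j\<in>J. (ee d m (-k))^j) = of_int c" using conj_sum[OF sf d1 k0 e1] .
    have "complex_of_real (\<Sum>j\<in>J. x^j) = complex_of_real (of_int c)" using e1 by (simp add: ex)
    hence "(\<Sum>j\<in>J. x^j) = of_int c" by (simp only: of_real_eq_iff)
    moreover have "complex_of_real (\<Sum>j\<in>J. x'^j) = complex_of_real (of_int c)" using e2 by (simp add: ex')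
    hence "(\<Sum>j\<in>J. x'^j) = of_int c" by (simp only: of_real_eq_iff)
    ultimately show ?thesis using J(1) by blast
  qed
  have neg: "t < 0" if h: "\<exists>J. finite J \<and> (\<Sum>j\<in>J. t^j) = -1" for t :: real
  proof (rule ccontr)
    assume "\<not> t < 0"
    obtain J where "(\<Sum>j\<in>J. t^j) = -1" using h by blast
    moreover have "(\<Sum>j\<in>J. t^j) \<ge> 0" using \<open>\<not> t < 0\<close> by (intro sum_nonneg) auto
    ultimately show False by simp
  qed
  have xn: "x < 0" using rs[of "-1"] by (intro neg) auto
  have xn': "x' < 0" using rs[of "-1"] by (intro neg) auto
  have prod: "x * x' = real_of_int N"
  proof -
    have "x * x' = (real_of_int m ^ 2 - real_of_int k ^ 2 * s^2) / 4"
      by (simp add: x_def x'_def power2_eq_square field_simps)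
    also have "\<dots> = real_of_int (m^2 - d * k^2) / 4" by (simp add: s2)
    also have "\<dots> = real_of_int N" by (simp add: N)
    finally show ?thesis .
  qed
  have "x * x' > 0" using xn xn' by (simp add: mult_neg_neg)
  hence NN: "N = 2" using N2 prod by auto
  have big: "\<bar>t\<bar> \<ge> 1" if h: "\<forall>c. \<exists>J. finite J \<and> (\<Sum>j\<in>J. t^j) = of_int c" for t :: real
  proof (rule ccontr)
    assume "\<not> \<bar>t\<bar> \<ge> 1" hence t1: "\<bar>t\<bar> < 1" by simp
    define c where "c = \<lceil>1 / (1 - \<bar>t\<bar>)\<rceil> + 1"
    obtain J where J: "finite J" "(\<Sum>j\<in>J. t^j) = of_int c" using h by blast
    have "of_int c \<le> 1 / (1 - \<bar>t\<bar>)" using geom_bound[OF t1 J(1)] J(2) by simp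
    moreover have "of_int c > 1 / (1 - \<bar>t\<bar>)" unfolding c_def
      by (metis of_int_add of_int_1 le_of_int_ceiling less_add_one order_le_less_trans)
    ultimately show False by simp
  qed
  have x1: "\<bar>x\<bar> \<ge> 1" using rs by (intro big) blast
  have x1': "\<bar>x'\<bar> \<ge> 1" using rs by (intro big) blast
  have "x \<noteq> -1"
  proof
    assume "x = -1"
    hence "ee d m k = -1" by (simp add: ex)
    moreover have "ee d (-2) 0 = -1" by (simp add: ee_def)
    ultimately have "ee d m k = ee d (-2) 0" by simp
    thus False using ee_inj[OF sf d1] k0 by blast
  qed
  have "x' \<noteq> -1"
  proof
    assume "x' = -1"
    hence "ee d m (-k) = -1" by (simp add: ex')
    moreover have "ee d (-2) 0 = -1" by (simp add: ee_def)
    ultimately have "ee d m (-k) = ee d (-2) 0" by simp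
    thus False using ee_inj[OF sf d1] k0 by fastforce
  qed
  have xl: "x < -1" using x1 xn \<open>x \<noteq> -1\<close> by auto
  have xl': "x' < -1" using x1' xn' \<open>x' \<noteq> -1\<close> by auto
  have sum: "x + x' = real_of_int m" by (simp add: x_def x'_def field_simps)
  have "(x + 1) * (x' + 1) > 0" using xl xl' by (intro mult_neg_neg) auto
  hence "x * x' + (x + x') + 1 > 0" by (simp add: algebra_simps)
  hence "real_of_int m > -3" using prod NN sum by simp
  moreover have "real_of_int m < -2" using xl xl' sum by simp
  ultimately have "m > -3" "m < -2" by simp_all
  thus False by simp
qed



lemma rep_step:
  assumes "e \<in> {0,1::complex}" "finite J" "y' = (\<Sum>j\<in>J. X^j)"
  shows "\<exists>J'. finite J' \<and> e + X * y' = (\<Sum>j\<in>J'. X^j)"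
proof -
  have s: "X * y' = (\<Sum>j\<in>Suc ` J. X^j)"
    using assms(3) by (simp add: sum_distrib_left sum.reindex)
  show ?thesis
  proof (cases "e = 0")
    case True thus ?thesis using s assms(2) by (intro exI[of _ "Suc ` J"]) auto
  next
    case False
    hence e1: "e = 1" using assms(1) by auto
    have "(\<Sum>j\<in>insert 0 (Suc ` J). X^j) = 1 + (\<Sum>j\<in>Suc ` J. X^j)"
      using assms(2) by (subst sum.insert) auto
    thus ?thesis using s e1 assms(2) by (intro exI[of _ "insert 0 (Suc ` J)"]) auto
  qed
qed

lemma uniq_rep:
  assumes X: "X \<in> Aset d" and X0: "X \<noteq> 0" and nu: "\<forall>w\<in>Aset d. 1 \<noteq> X * w"
  shows "J \<subseteq> {..<B} \<Longrightarrow> K \<subseteq> {..<B} \<Longrightarrow> (\<Sum>j\<in>J. X^j) = (\<Sum>j\<in>K. X^j) \<Longrightarrow> J = K"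
proof (induction B arbitrary: J K)
  case 0 thus ?case by auto
next
  case (Suc B)
  have fJ: "finite J" "finite K" using Suc.prems(1,2) finite_subset by auto
  define J' where "J' = Suc -` J"
  define K' where "K' = Suc -` K"
  have fJ': "finite J'" "finite K'" unfolding J'_def K'_def using fJ by (auto intro: finite_vimageI)
  have J'B: "J' \<subseteq> {..<B}" "K' \<subseteq> {..<B}" using Suc.prems(1,2) by (auto simp: J'_def K'_def)
  have sJ: "(\<Sum>j\<in>J. X^j) = (if 0 \<in> J then 1 else 0) + X * (\<Sum>j\<in>J'. X^j)"
    unfolding J'_def by (rule sum_pow_split[OF fJ(1)])
  have sK: "(\<Sum>j\<in>K. X^j) = (if 0 \<in> K then 1 else 0) + X * (\<Sum>j\<in>K'. X^j)"
    unfolding K'_def by (rule sum_pow_split[OF fJ(2)])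
  have AJ: "(\<Sum>j\<in>J'. X^j) \<in> Aset d" "(\<Sum>j\<in>K'. X^j) \<in> Aset d"
    using fJ' X by (auto intro: sum_pow_A)
  have z: "(0 \<in> J) = (0 \<in> K)"
  proof (rule ccontr)
    assume "(0 \<in> J) \<noteq> (0 \<in> K)"
    then consider "0 \<in> J" "0 \<notin> K" | "0 \<notin> J" "0 \<in> K" by blast
    thus False
    proof cases
      case 1
      hence "1 = X * ((\<Sum>j\<in>K'. X^j) - (\<Sum>j\<in>J'. X^j))"
        using Suc.prems(3) sJ sK by (simp add: algebra_simps)
      thus False using nu A_diff[OF AJ(2) AJ(1)] by blast
    next
      case 2
      hence "1 = X * ((\<Sum>j\<in>J'. X^j) - (\<Sum>j\<in>K'. X^j))"
        using Suc.prems(3) sJ sK by (simp add: algebra_simps)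
      thus False using nu A_diff[OF AJ(1) AJ(2)] by blast
    qed
  qed
  have "X * (\<Sum>j\<in>J'. X^j) = X * (\<Sum>j\<in>K'. X^j)" using Suc.prems(3) sJ sK z by simp
  hence "(\<Sum>j\<in>J'. X^j) = (\<Sum>j\<in>K'. X^j)" using X0 by simp
  hence JK': "J' = K'" using Suc.IH J'B by blast
  show "J = K"
  proof (intro set_eqI)
    fix x show "x \<in> J \<longleftrightarrow> x \<in> K"
    proof (cases x)
      case 0 thus ?thesis using z by simp
    next
      case (Suc y)
      have "y \<in> J' \<longleftrightarrow> y \<in> K'" using JK' by simp
      thus ?thesis by (simp add: Suc J'_def K'_def)
    qed
  qed
qed

lemma fin_bound: "finite (J :: nat set) \<Longrightarrow> \<exists>B. J \<subseteq> {..<B}"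
  by (metis finite_nat_iff_bounded lessThan_iff subsetI)

lemma real_ineq:
  fixes t :: real
  assumes "t \<ge> 0" "t^2 \<ge> 6"
  shows "(t + 1)^2 < 2 * t^2"
proof -
  have "t > 61/25"
  proof (rule ccontr)
    assume "\<not> t > 61/25"
    hence "t^2 \<le> (61/25)^2" using assms(1) by (intro power_mono) auto
    moreover have "(61/25::real)^2 < 6" by (simp add: power2_eq_square)
    ultimately show False using assms(2) by linarith
  qed
  hence "(36/25)^2 < (t - 1)^2" by (intro power_strict_mono) auto
  thus ?thesis by (simp add: power2_eq_square algebra_simps)
qed

lemma exist_rep:
  fixes A :: "complex set"
  assumes dec: "\<forall>y\<in>A. \<exists>e\<in>{0,1}. \<exists>y'\<in>A. y = e + X * y'"
    and nX: "cmod X ^ 2 = 2"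
    and nat: "\<forall>y\<in>A. \<exists>n::nat. cmod y ^ 2 = real n"
    and small: "\<forall>y\<in>A. cmod y ^ 2 < 6 \<longrightarrow> (\<exists>J. finite J \<and> y = (\<Sum>j\<in>J. X^j))"
  shows "y \<in> A \<Longrightarrow> cmod y ^ 2 = real n \<Longrightarrow> \<exists>J. finite J \<and> y = (\<Sum>j\<in>J. X^j)"
proof (induction n arbitrary: y rule: less_induct)
  case (less n)
  show ?case
  proof (cases "cmod y ^ 2 < 6")
    case True thus ?thesis using small less.prems(1) by blast
  next
    case False
    obtain e y' where e: "e \<in> {0,1}" and y': "y' \<in> A" and ye: "y = e + X * y'"
      using dec less.prems(1) by blast
    obtain n' where n': "cmod y' ^ 2 = real n'" using nat y' by blast
    have "cmod (y - e) = cmod X * cmod y'" using ye by (simp add: norm_mult)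
    hence "cmod (y - e) ^ 2 = 2 * cmod y' ^ 2" using nX by (simp add: power_mult_distrib)
    moreover have "cmod (y - e) \<le> cmod y + 1"
      using norm_triangle_ineq4[of y e] e by auto
    hence "cmod (y - e) ^ 2 \<le> (cmod y + 1) ^ 2" by (intro power_mono) auto
    moreover have "(cmod y + 1)^2 < 2 * cmod y ^ 2" using False by (intro real_ineq) auto
    ultimately have "cmod y' ^ 2 < cmod y ^ 2" by simp
    hence "n' < n" using n' less.prems(2) by simp
    then obtain J where J: "finite J" "y' = (\<Sum>j\<in>J. X^j)" using less.IH y' n' by blast
    show ?thesis using rep_step[OF e J] ye by simp
  qed
qed

lemma cmod_ee:
  assumes "d < 0"
  shows "cmod (ee d m k) ^ 2 = (real_of_int m ^ 2 - real_of_int d * real_of_int k ^ 2) / 4"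
proof -
  have cs: "csqrt (of_int d) = \<i> * complex_of_real (sqrt (- real_of_int d))"
    using assms by (subst csqrt_of_real_nonpos) auto
  have re: "Re (ee d m k) = real_of_int m / 2" and im: "Im (ee d m k) = real_of_int k * sqrt (- real_of_int d) / 2"
    by (simp_all add: ee_def cs)
  have sq: "(sqrt (- real_of_int d))^2 = - real_of_int d" using assms by simp
  have "cmod (ee d m k) ^ 2 = (real_of_int m / 2)^2 + (real_of_int k * sqrt (- real_of_int d) / 2)^2"
    by (simp only: cmod_power2 re im)
  also have "\<dots> = (real_of_int m)^2 / 4 + (real_of_int k)^2 * (sqrt (- real_of_int d))^2 / 4"
    by (simp add: power_divide power_mult_distrib)
  also have "\<dots> = (real_of_int m ^ 2 - real_of_int d * real_of_int k ^ 2) / 4"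
    by (simp add: sq field_simps)
  finally show ?thesis .
qed

lemma Sgen_neg:
  assumes dneg: "d < 0" and X: "X \<in> Aset d" and nX: "cmod X ^ 2 = 2"
    and dec: "\<forall>y\<in>Aset d. \<exists>e\<in>{0,1}. \<exists>y'\<in>Aset d. y = e + X * y'"
    and small: "\<forall>y\<in>Aset d. cmod y ^ 2 < 6 \<longrightarrow> (\<exists>J. finite J \<and> y = (\<Sum>j\<in>J. X^j))"
  shows "S_generator (Aset d) X"
proof -
  have nat: "\<forall>y\<in>Aset d. \<exists>n::nat. cmod y ^ 2 = real n"
  proof
    fix y assume "y \<in> Aset d"
    then obtain m k where y: "y = ee d m k" and dv: "4 dvd m^2 - d * k^2" unfolding Aset_ee by blast
    obtain N where N: "m^2 - d * k^2 = 4 * N" using dv by blast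
    have "0 \<le> (-d) * k^2" using dneg by (intro mult_nonneg_nonneg) auto
    moreover have "0 \<le> m^2" by simp
    ultimately have "0 \<le> m^2 - d * k^2" by linarith
    hence N0: "N \<ge> 0" using N by simp
    have "cmod y ^ 2 = real_of_int (m^2 - d * k^2) / 4" using cmod_ee[OF dneg] by (simp add: y)
    also have "\<dots> = real (nat N)" using N N0 by simp
    finally show "\<exists>n::nat. cmod y ^ 2 = real n" by blast
  qed
  have X0: "X \<noteq> 0" using nX by auto
  have nu: "\<forall>w\<in>Aset d. 1 \<noteq> X * w"
  proof (intro ballI notI)
    fix w assume w: "w \<in> Aset d" and 1: "1 = X * w"
    obtain n where n: "cmod w ^ 2 = real n" using nat w by blast
    have "1 = cmod (X * w) ^ 2" using 1 by (metis norm_one one_power2)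
    also have "\<dots> = 2 * real n" using nX n by (simp add: norm_mult power_mult_distrib)
    finally have "real (2 * n) = 1" by simp
    hence "2 * n = 1" by linarith
    thus False by presburger
  qed
  show ?thesis unfolding S_generator_def
  proof (intro conjI X ballI ex_ex1I)
    fix y assume y: "y \<in> Aset d"
    obtain n where "cmod y ^ 2 = real n" using nat y by blast
    thus "\<exists>J. finite J \<and> y = (\<Sum>j\<in>J. X^j)" using exist_rep[OF dec nX nat small y] by blast
  next
    fix y J K assume "finite J \<and> y = (\<Sum>j\<in>J. X^j)" "finite K \<and> y = (\<Sum>j\<in>K. X^j)"
    moreover obtain B1 where "J \<subseteq> {..<B1}" using fin_bound calculation(1) by blast
    moreover obtain B2 where "K \<subseteq> {..<B2}" using fin_bound calculation(2) by blast
    ultimately have "J \<subseteq> {..<max B1 B2}" "K \<subseteq> {..<max B1 B2}"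
      "(\<Sum>j\<in>J. X^j) = (\<Sum>j\<in>K. X^j)" by auto
    thus "J = K" by (rule uniq_rep[OF X X0 nu])
  qed
qed

fun chain :: "(int \<Rightarrow> int \<Rightarrow> int \<times> int \<times> int) \<Rightarrow> (int \<times> int) list \<Rightarrow> bool" where
  "chain f [] = True"
| "chain f ((m,k) # L) = ((case f m k of (e, m', k') \<Rightarrow> (m' = 0 \<and> k' = 0) \<or> (m', k') \<in> set L) \<and> chain f L)"

lemma chain_rep:
  assumes st: "\<And>m k. 4 dvd m^2 - d * k^2 \<Longrightarrow> (case f m k of (e, m', k') \<Rightarrow>
        e \<in> {0,1} \<and> 4 dvd m'^2 - d * k'^2 \<and> ee d m k = of_int e + X * ee d m' k')"
  shows "chain f L \<Longrightarrow> (\<forall>(m,k)\<in>set L. 4 dvd m^2 - d * k^2) \<Longrightarrow>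
     \<forall>(m,k)\<in>set L. \<exists>J. finite J \<and> ee d m k = (\<Sum>j\<in>J. X^j)"
proof (induction L)
  case Nil thus ?case by simp
next
  case (Cons a L)
  obtain m k where a: "a = (m, k)" by (cases a)
  obtain e m' k' where f: "f m k = (e, m', k')" by (cases "f m k")
  have c: "4 dvd m^2 - d * k^2" using Cons.prems(2) a by auto
  have IH: "\<forall>(m,k)\<in>set L. \<exists>J. finite J \<and> ee d m k = (\<Sum>j\<in>J. X^j)"
    using Cons.IH Cons.prems a by auto
  have s: "e \<in> {0,1}" "ee d m k = of_int e + X * ee d m' k'" using st[OF c] f by auto
  have "(m' = 0 \<and> k' = 0) \<or> (m', k') \<in> set L" using Cons.prems(1) a f by simp
  hence "\<exists>J. finite J \<and> ee d m' k' = (\<Sum>j\<in>J. X^j)"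
  proof
    assume "m' = 0 \<and> k' = 0" thus ?thesis by (intro exI[of _ "{}"]) (simp add: ee_def)
  qed (use IH in auto)
  then obtain J where J: "finite J" "ee d m' k' = (\<Sum>j\<in>J. X^j)" by blast
  have e': "(of_int e :: complex) \<in> {0,1}" using s(1) by auto
  have "\<exists>J. finite J \<and> ee d m k = (\<Sum>j\<in>J. X^j)" using rep_step[OF e' J] s(2) by simp
  thus ?case using IH a by auto
qed

lemma dec_eq:
  assumes "2*m = 4*e + p*m' + d*q*k'" "2*k = p*k' + q*m'"
  shows "ee d m k = of_int e + ee d p q * ee d m' k'"
proof -
  have "ee d p q * ee d m' k' = (of_int (p*m' + d*q*k') + of_int (p*k' + q*m') * csqrt (of_int d)) / 4"
    by (simp add: ee_mult mult_ac)
  also have "\<dots> = (of_int (2*m - 4*e) + of_int (2*k) * csqrt (of_int d)) / 4"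
    using assms by (simp add: algebra_simps)
  also have "\<dots> = ee d m k - of_int e" by (simp add: ee_def field_simps)
  finally show ?thesis by simp
qed



lemma dec_from_step:
  assumes st: "\<And>m k. 4 dvd m^2 - d * k^2 \<Longrightarrow> (case f m k of (e, m', k') \<Rightarrow>
        e \<in> {0,1} \<and> 4 dvd m'^2 - d * k'^2 \<and> ee d m k = of_int e + X * ee d m' k')"
  shows "\<forall>y\<in>Aset d. \<exists>e\<in>{0,1}. \<exists>y'\<in>Aset d. y = e + X * y'"
proof
  fix y assume "y \<in> Aset d"
  then obtain m k where y: "y = ee d m k" and c: "4 dvd m^2 - d * k^2" unfolding Aset_ee by blast
  obtain e m' k' where f: "f m k = (e, m', k')" by (cases "f m k")
  have s: "e \<in> {0,1}" "4 dvd m'^2 - d * k'^2" "ee d m k = of_int e + X * ee d m' k'"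
    using st[OF c] f by auto
  have "(of_int e :: complex) \<in> {0,1}" using s(1) by auto
  moreover have "ee d m' k' \<in> Aset d" using s(2) by (rule ee_in)
  ultimately show "\<exists>e\<in>{0,1}. \<exists>y'\<in>Aset d. y = e + X * y'" using s(3) y by blast
qed

lemma sq_lt_24: "(m::int)^2 < 24 \<Longrightarrow> m \<in> set [-4..4]"
proof -
  assume m: "m^2 < 24"
  have "\<bar>m\<bar> \<le> 4"
  proof (rule ccontr)
    assume "\<not> \<bar>m\<bar> \<le> 4" hence "5 \<le> \<bar>m\<bar>" by simp
    hence "5^2 \<le> \<bar>m\<bar>^2" by (intro power_mono) auto
    thus False using m by simp
  qed
  thus ?thesis by auto
qed

lemma small_from_chain:
  assumes dneg: "d < 0"
    and st: "\<And>m k. 4 dvd m^2 - d * k^2 \<Longrightarrow> (case f m k of (e, m', k') \<Rightarrow>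
        e \<in> {0,1} \<and> 4 dvd m'^2 - d * k'^2 \<and> ee d m k = of_int e + X * ee d m' k')"
    and ch: "chain f L" and cL: "list_all (\<lambda>(m,k). 4 dvd m^2 - d * k^2) L"
    and en: "list_all (\<lambda>(m,k). 4 dvd m^2 - d * k^2 \<and> m^2 - d * k^2 < 24 \<longrightarrow> (m = 0 \<and> k = 0) \<or> (m,k) \<in> set L)
          (List.product [-4..4] [-4..4])"
  shows "\<forall>y\<in>Aset d. cmod y ^ 2 < 6 \<longrightarrow> (\<exists>J. finite J \<and> y = (\<Sum>j\<in>J. X^j))"
proof (intro ballI impI)
  fix y assume "y \<in> Aset d" and y6: "cmod y ^ 2 < 6"
  then obtain m k where y: "y = ee d m k" and c: "4 dvd m^2 - d * k^2" unfolding Aset_ee by blast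
  define t where "t = real_of_int (m^2 - d * k^2)"
  have "cmod y ^ 2 = t / 4" using cmod_ee[OF dneg] by (simp add: y t_def)
  hence "t < 24" using y6 by linarith
  hence "real_of_int (m^2 - d * k^2) < 24" by (simp only: t_def)
  hence lt: "m^2 - d * k^2 < 24" by (simp only: of_int_less_numeral_iff)
  have "0 \<le> (-d) * k^2" using dneg by (intro mult_nonneg_nonneg) auto
  hence "m^2 < 24" using lt by linarith
  hence mm: "m \<in> set [-4..4]" by (rule sq_lt_24)
  have "1 * k^2 \<le> (-d) * k^2" using dneg by (intro mult_right_mono) auto
  hence k1: "k^2 \<le> (-d) * k^2" by simp
  have m0: "0 \<le> m^2" by simp
  have "k^2 < 24" using k1 m0 lt by linarith
  hence kk: "k \<in> set [-4..4]" by (rule sq_lt_24)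
  have mem: "(m,k) \<in> set (List.product [-4..4] [-4..4])" unfolding set_product using mm kk by blast
  have "\<forall>p\<in>set (List.product [-4..4] [-4..4]). (\<lambda>(m,k). 4 dvd m^2 - d * k^2 \<and> m^2 - d * k^2 < 24 \<longrightarrow> (m = 0 \<and> k = 0) \<or> (m,k) \<in> set L) p"
    using en by (simp only: list_all_iff)
  hence "(\<lambda>(m,k). 4 dvd m^2 - d * k^2 \<and> m^2 - d * k^2 < 24 \<longrightarrow> (m = 0 \<and> k = 0) \<or> (m,k) \<in> set L) (m,k)"
    using mem by (rule bspec)
  hence mk: "(m = 0 \<and> k = 0) \<or> (m,k) \<in> set L" using c lt by simp
  have all: "\<forall>(m,k)\<in>set L. \<exists>J. finite J \<and> ee d m k = (\<Sum>j\<in>J. X^j)"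
    using chain_rep[OF st ch] cL by (auto simp: list_all_iff)
  from mk show "\<exists>J. finite J \<and> y = (\<Sum>j\<in>J. X^j)"
  proof
    assume "m = 0 \<and> k = 0" thus ?thesis by (intro exI[of _ "{}"]) (simp add: y ee_def)
  qed (use all y in auto)
qed

definition step1 :: "int \<Rightarrow> int \<Rightarrow> int \<times> int \<times> int" where
  "step1 m k = (let a = m div 2; b = k div 2; e = (a + b) mod 2 in (e, b + e - a, e - a - b))"

lemma cond1: "4 dvd m^2 - (-1) * k^2 \<Longrightarrow> even m \<and> even (k::int)"
proof -
  assume c: "4 dvd m^2 - (-1) * k^2"
  have "even m \<longleftrightarrow> even (-1::int) \<or> even k" using c by (rule par)
  hence "even m \<longleftrightarrow> even k" by simp
  moreover have "\<not> (odd m \<and> odd k)"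
  proof
    assume "odd m \<and> odd k"
    then obtain a b where "m = 2*a+1" "k = 2*b+1" by (meson oddE)
    hence "m^2 - (-1) * k^2 = 4 * (a^2 + a + b^2 + b) + 2" by (simp add: power2_eq_square algebra_simps)
    thus False using c by presburger
  qed
  ultimately show ?thesis by blast
qed

lemma st1: "4 dvd m^2 - (-1) * k^2 \<Longrightarrow> (case step1 m k of (e, m', k') \<Rightarrow>
        e \<in> {0,1} \<and> 4 dvd m'^2 - (-1) * k'^2 \<and> ee (-1) m k = of_int e + ee (-1) (-2) 2 * ee (-1) m' k')"
proof -
  assume c: "4 dvd m^2 - (-1) * k^2"
  then obtain a b where a: "m = 2*a" and b: "k = 2*b" using cond1 by blast
  define e where "e = (a + b) mod 2"
  have e01: "e \<in> {0,1}" unfolding e_def by auto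
  have ab: "a + b = 2 * ((a + b) div 2) + e" unfolding e_def by simp
  have ev: "even (b + e - a)" "even (e - a - b)" using ab by presburger+
  then obtain m'' k'' where m'': "b + e - a = 2*m''" and k'': "e - a - b = 2*k''" by (meson evenE)
  have "(b + e - a)^2 - (-1) * (e - a - b)^2 = 4 * (m''^2 + k''^2)"
    by (simp only: m'' k'') (simp add: power2_eq_square algebra_simps)
  hence "4 dvd (b + e - a)^2 - (-1) * (e - a - b)^2" by simp
  moreover have "ee (-1) m k = of_int e + ee (-1) (-2) 2 * ee (-1) (b + e - a) (e - a - b)"
    by (rule dec_eq) (simp_all add: a b algebra_simps)
  moreover have "step1 m k = (e, b + e - a, e - a - b)" by (simp add: step1_def a b e_def Let_def)
  ultimately show ?thesis using e01 by simp
qed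

lemma chain1: "chain step1 [(-4,-2), (-2,-4), (0,4), (2,4), (2,-2), (4,-2), (-4,0), (-4,2), (-2,0), (-2,4), (2,2), (4,0), (4,2), (-2,-2), (0,-4), (0,-2), (2,-4), (-2,2), (0,2), (2,0)]"
  by code_simp

lemma en1: "list_all (\<lambda>(m,k). 4 dvd m^2 - (-1) * k^2 \<and> m^2 - (-1) * k^2 < 24 \<longrightarrow> (m = 0 \<and> k = 0) \<or> (m,k) \<in> set [(-4,-2), (-2,-4), (0,4), (2,4), (2,-2), (4,-2), (-4,0), (-4,2), (-2,0), (-2,4), (2,2), (4,0), (4,2), (-2,-2), (0,-4), (0,-2), (2,-4), (-2,2), (0,2), (2,0)])
          (List.product [-4..4] [-4..4::int])"
  by code_simp



lemma csqrt_m1: "csqrt (of_int (-1)) = \<i>"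
  by (subst csqrt_of_real_nonpos) auto

lemma L1_cond: "list_all (\<lambda>(m,k). 4 dvd m^2 - (-1) * k^2) [(-4,-2), (-2,-4), (0,4), (2,4), (2,-2), (4,-2), (-4,0), (-4,2), (-2,0), (-2,4), (2,2), (4,0), (4,2), (-2,-2), (0,-4), (0,-2), (2,-4), (-2,2), (0,2), (2,0::int)]"
  by code_simp

lemma gen1: "S_generator (Aset (-1)) (-1 + \<i>)"
proof -
  have X: "ee (-1) (-2) 2 = -1 + \<i>" by (simp add: ee_def csqrt_m1)
  have "S_generator (Aset (-1)) (ee (-1) (-2) 2)"
  proof (rule Sgen_neg)
    show "ee (-1) (-2) 2 \<in> Aset (-1)" by (rule ee_in) simp
    show "cmod (ee (-1) (-2) 2) ^ 2 = 2" by (subst cmod_ee) simp_all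
    show "\<forall>y\<in>Aset (-1). \<exists>e\<in>{0,1}. \<exists>y'\<in>Aset (-1). y = e + ee (-1) (-2) 2 * y'"
      by (rule dec_from_step[OF st1])
    show "\<forall>y\<in>Aset (-1). cmod y ^ 2 < 6 \<longrightarrow> (\<exists>J. finite J \<and> y = (\<Sum>j\<in>J. (ee (-1) (-2) 2)^j))"
      by (rule small_from_chain[OF _ st1 chain1 L1_cond en1]) simp
  qed simp
  thus ?thesis by (simp only: X)
qed

definition step2 :: "int \<Rightarrow> int \<Rightarrow> int \<times> int \<times> int" where
  "step2 m k = (let a = m div 2; e = a mod 2 in (e, k, e - a))"

lemma cond2: "4 dvd m^2 - (-2) * k^2 \<Longrightarrow> even m \<and> even (k::int)"
proof -
  assume c: "4 dvd m^2 - (-2) * k^2"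
  have "even m \<longleftrightarrow> even (-2::int) \<or> even k" using c by (rule par)
  hence em: "even m" by simp
  then obtain a where a: "m = 2 * a" by (elim evenE)
  obtain t where t: "m^2 - (-2) * k^2 = 4 * t" using c by (elim dvdE)
  have "k^2 = 2 * (t - a^2)" using t by (simp add: a power2_eq_square algebra_simps)
  hence "even (k^2)" by simp
  hence "even k" by simp
  thus ?thesis using em by simp
qed

lemma st2: "4 dvd m^2 - (-2) * k^2 \<Longrightarrow> (case step2 m k of (e, m', k') \<Rightarrow>
        e \<in> {0,1} \<and> 4 dvd m'^2 - (-2) * k'^2 \<and> ee (-2) m k = of_int e + ee (-2) 0 2 * ee (-2) m' k')"
proof -
  assume c: "4 dvd m^2 - (-2) * k^2"
  then obtain a b where a: "m = 2*a" and b: "k = 2*b" using cond2 by blast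
  define e where "e = a mod 2"
  have e01: "e \<in> {0,1}" unfolding e_def by auto
  have ab: "a = 2 * (a div 2) + e" unfolding e_def by simp
  have "even (e - a)" using ab by presburger
  then obtain k'' where k'': "e - a = 2*k''" by (meson evenE)
  have "k^2 - (-2) * (e - a)^2 = 4 * (b^2 + 2 * k''^2)"
    by (simp only: b k'') (simp add: power2_eq_square algebra_simps)
  hence "4 dvd k^2 - (-2) * (e - a)^2" by simp
  moreover have "ee (-2) m k = of_int e + ee (-2) 0 2 * ee (-2) k (e - a)"
    by (rule dec_eq) (simp_all add: a b algebra_simps)
  moreover have "step2 m k = (e, k, e - a)" by (simp add: step2_def a e_def Let_def)
  ultimately show ?thesis using e01 by simp
qed

lemma chain2: "chain step2 [(4,0), (-2,-2), (0,-2), (2,-2), (-4,0), (-2,0), (-2,2), (0,2), (2,2), (2,0)]"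
  by code_simp

lemma L2_cond: "list_all (\<lambda>(m,k). 4 dvd m^2 - (-2) * k^2) [(4,0), (-2,-2), (0,-2), (2,-2), (-4,0), (-2,0), (-2,2), (0,2), (2,2), (2,0::int)]"
  by code_simp

lemma en2: "list_all (\<lambda>(m,k). 4 dvd m^2 - (-2) * k^2 \<and> m^2 - (-2) * k^2 < 24 \<longrightarrow> (m = 0 \<and> k = 0) \<or> (m,k) \<in> set [(4,0), (-2,-2), (0,-2), (2,-2), (-4,0), (-2,0), (-2,2), (0,2), (2,2), (2,0)])
          (List.product [-4..4] [-4..4::int])"
  by code_simp

lemma gen2: "S_generator (Aset (-2)) (csqrt (-2))"
proof -
  have X: "ee (-2) 0 2 = csqrt (-2)" by (simp add: ee_def)
  have "S_generator (Aset (-2)) (ee (-2) 0 2)"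
  proof (rule Sgen_neg)
    show "ee (-2) 0 2 \<in> Aset (-2)" by (rule ee_in) simp
    show "cmod (ee (-2) 0 2) ^ 2 = 2" by (subst cmod_ee) simp_all
    show "\<forall>y\<in>Aset (-2). \<exists>e\<in>{0,1}. \<exists>y'\<in>Aset (-2). y = e + ee (-2) 0 2 * y'"
      by (rule dec_from_step[OF st2])
    show "\<forall>y\<in>Aset (-2). cmod y ^ 2 < 6 \<longrightarrow> (\<exists>J. finite J \<and> y = (\<Sum>j\<in>J. (ee (-2) 0 2)^j))"
      by (rule small_from_chain[OF _ st2 chain2 L2_cond en2]) simp
  qed simp
  thus ?thesis by (simp only: X)
qed

definition step7 :: "int \<Rightarrow> int \<Rightarrow> int \<times> int \<times> int" where
  "step7 m k = (let e = (if (k - m) mod 4 = 0 then 0 else 1); k' = (k - m + 2 * e) div 4 in (e, 2 * k - k', k'))"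

lemma cond7: "4 dvd m^2 - (-7) * k^2 \<Longrightarrow> (even m \<longleftrightarrow> even (k::int))"
proof -
  assume c: "4 dvd m^2 - (-7) * k^2"
  have "even m \<longleftrightarrow> even (-7::int) \<or> even k" using c by (rule par)
  thus ?thesis by simp
qed

lemma cond7c: "(even m \<longleftrightarrow> even (k::int)) \<Longrightarrow> 4 dvd m^2 - (-7) * k^2"
proof -
  assume p: "even m \<longleftrightarrow> even k"
  show ?thesis
  proof (cases "even m")
    case True
    then obtain a b where "m = 2*a" "k = 2*b" using p by (meson evenE)
    hence "m^2 - (-7) * k^2 = 4 * (a^2 + 7 * b^2)" by (simp add: power2_eq_square algebra_simps)
    thus ?thesis by simp
  next
    case False
    then obtain a b where "m = 2*a+1" "k = 2*b+1" using p by (meson oddE)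
    hence "m^2 - (-7) * k^2 = 4 * (a^2 + a + 7 * b^2 + 7 * b + 2)" by (simp add: power2_eq_square algebra_simps)
    thus ?thesis by simp
  qed
qed

lemma st7: "4 dvd m^2 - (-7) * k^2 \<Longrightarrow> (case step7 m k of (e, m', k') \<Rightarrow>
        e \<in> {0,1} \<and> 4 dvd m'^2 - (-7) * k'^2 \<and> ee (-7) m k = of_int e + ee (-7) 1 1 * ee (-7) m' k')"
proof -
  assume c: "4 dvd m^2 - (-7) * k^2"
  have p: "even m \<longleftrightarrow> even k" using c by (rule cond7)
  define e :: int where "e = (if (k - m) mod 4 = 0 then 0 else 1)"
  have e01: "e \<in> {0,1}" unfolding e_def by auto
  have "even (k - m)" using p by simp
  hence "4 dvd (k - m + 2 * e)" unfolding e_def by presburger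
  then obtain k'' where k'': "k - m + 2 * e = 4 * k''" by (elim dvdE)
  have kd: "(k - m + 2 * e) div 4 = k''" using k'' by simp
  have "even (2 * k - k'') \<longleftrightarrow> even k''" by simp
  hence "4 dvd (2 * k - k'')^2 - (-7) * k''^2" by (rule cond7c)
  moreover have "ee (-7) m k = of_int e + ee (-7) 1 1 * ee (-7) (2 * k - k'') k''"
    by (rule dec_eq) (use k'' in \<open>simp_all add: algebra_simps\<close>)
  moreover have "step7 m k = (e, 2 * k - k'', k'')" by (simp add: step7_def e_def[symmetric] kd Let_def)
  ultimately show ?thesis using e01 by simp
qed

lemma chain7: "chain step7 [(3,-1), (4,0), (-1,-1), (1,-1), (-4,0), (-3,-1), (-2,0), (-3,1), (-1,1), (1,1), (3,1), (2,0)]"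
  by code_simp

lemma L7_cond: "list_all (\<lambda>(m,k). 4 dvd m^2 - (-7) * k^2) [(3,-1), (4,0), (-1,-1), (1,-1), (-4,0), (-3,-1), (-2,0), (-3,1), (-1,1), (1,1), (3,1), (2,0::int)]"
  by code_simp

lemma en7: "list_all (\<lambda>(m,k). 4 dvd m^2 - (-7) * k^2 \<and> m^2 - (-7) * k^2 < 24 \<longrightarrow> (m = 0 \<and> k = 0) \<or> (m,k) \<in> set [(3,-1), (4,0), (-1,-1), (1,-1), (-4,0), (-3,-1), (-2,0), (-3,1), (-1,1), (1,1), (3,1), (2,0)])
          (List.product [-4..4] [-4..4::int])"
  by code_simp

lemma gen7: "S_generator (Aset (-7)) ((1 + csqrt (-7)) / 2)"
proof -
  have X: "ee (-7) 1 1 = (1 + csqrt (-7)) / 2" by (simp add: ee_def)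
  have "S_generator (Aset (-7)) (ee (-7) 1 1)"
  proof (rule Sgen_neg)
    show "ee (-7) 1 1 \<in> Aset (-7)" by (rule ee_in) simp
    show "cmod (ee (-7) 1 1) ^ 2 = 2" by (subst cmod_ee) simp_all
    show "\<forall>y\<in>Aset (-7). \<exists>e\<in>{0,1}. \<exists>y'\<in>Aset (-7). y = e + ee (-7) 1 1 * y'"
      by (rule dec_from_step[OF st7])
    show "\<forall>y\<in>Aset (-7). cmod y ^ 2 < 6 \<longrightarrow> (\<exists>J. finite J \<and> y = (\<Sum>j\<in>J. (ee (-7) 1 1)^j))"
      by (rule small_from_chain[OF _ st7 chain7 L7_cond en7]) simp
  qed simp
  thus ?thesis by (simp only: X)
qed



lemma sf_small:
  fixes p :: int
  assumes "p \<in> {2, 7}"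
  shows "squarefree (-p)"
proof -
  have "squarefree p" unfolding squarefree_def
  proof (intro allI impI)
    fix x :: int assume x: "x^2 dvd p"
    have "x^2 \<le> p" using x assms by (intro zdvd_imp_le) auto
    hence "\<bar>x\<bar> \<le> 2"
    proof -
      assume h: "x^2 \<le> p"
      show ?thesis
      proof (rule ccontr)
        assume "\<not> \<bar>x\<bar> \<le> 2" hence "3 \<le> \<bar>x\<bar>" by simp
        hence "3^2 \<le> \<bar>x\<bar>^2" by (intro power_mono) auto
        thus False using h assms by auto
      qed
    qed
    hence "x = -2 \<or> x = -1 \<or> x = 0 \<or> x = 1 \<or> x = 2" by arith
    thus "x dvd 1" using x assms by auto
  qed
  thus ?thesis by simp
qed

lemma forward:
  assumes sf: "squarefree d" and d1: "d \<noteq> 1" and S: "S_generator (Aset d) X"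
  shows "d \<in> {-1, -2, -7}"
proof -
  have "d \<noteq> 0" using sf by auto
  moreover have "\<not> d > 0" using pos_case[OF sf d1 _ S] by blast
  ultimately have dneg: "d < 0" by simp
  have "X \<in> Aset d" using S unfolding S_generator_def by blast
  then obtain m k where X: "X = ee d m k" and dX: "4 dvd m^2 - d * k^2" unfolding Aset_ee by blast
  obtain N where N: "m^2 - d * k^2 = 4 * N" using dX by blast
  have N2: "N = 2 \<or> N = -2" using norm_cases[OF sf d1 S X N] .
  have "0 \<le> (-d) * k^2" using dneg by (intro mult_nonneg_nonneg) auto
  moreover have "0 \<le> m^2" by simp
  ultimately have "0 \<le> m^2 - d * k^2" by linarith
  hence "N = 2" using N N2 by auto
  hence "m^2 - d * k^2 = 8" using N by simp
  thus ?thesis using neg_arith[OF dneg sf] by auto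
qed

theorem proposition6p1:
  fixes d :: int
  assumes "squarefree d" and "d \<noteq> 1"
  shows "((\<exists>X. S_generator (ring_of_integers (quad_field d)) X) \<longleftrightarrow> d \<in> {-1, -2, -7})
    \<and> S_generator (ring_of_integers (quad_field (-1))) (-1 + \<i>)
    \<and> S_generator (ring_of_integers (quad_field (-2))) (csqrt (-2))
    \<and> S_generator (ring_of_integers (quad_field (-7))) ((1 + csqrt (-7)) / 2)"
proof -
  have s1: "squarefree (-1::int)" by simp
  have s2: "squarefree (-2::int)" using sf_small[of 2] by simp
  have s7: "squarefree (-7::int)" using sf_small[of 7] by simp
  have g1: "S_generator (ring_of_integers (quad_field (-1))) (-1 + \<i>)"
    using gen1 OK_char[OF s1] by simp
  have g2: "S_generator (ring_of_integers (quad_field (-2))) (csqrt (-2))"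
    using gen2 OK_char[OF s2] by simp
  have g7: "S_generator (ring_of_integers (quad_field (-7))) ((1 + csqrt (-7)) / 2)"
    using gen7 OK_char[OF s7] by simp
  have "(\<exists>X. S_generator (ring_of_integers (quad_field d)) X) \<longleftrightarrow> d \<in> {-1, -2, -7}"
  proof
    assume "\<exists>X. S_generator (ring_of_integers (quad_field d)) X"
    then obtain X where "S_generator (Aset d) X" using OK_char[OF assms] by auto
    thus "d \<in> {-1, -2, -7}" using forward[OF assms] by blast
  next
    assume "d \<in> {-1, -2, -7}"
    thus "\<exists>X. S_generator (ring_of_integers (quad_field d)) X" using g1 g2 g7 by auto
  qed
  thus ?thesis using g1 g2 g7 by blast
qed

end
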